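(* Let $\mathbb{X}$ be a two-dimensional real Banach space, let $x\in S_{\mathbb{X}}$, $\epsilon\in[0,1)$, and let $y\in S_{\mathbb{X}}$ be such that $x\perp_B y$. Let $t_1=\inf\{t\in[0,1] : x\perp_D^{\epsilon}((1-t)x+ty)\}$ and $t_2=\inf\{t\in[0,1] : x\perp_D^{\epsilon}(-(1-t)x+ty)\}$, put $u_1=(1-t_1)x+t_1y$, $u_2=-(1-t_2)x+t_2y$, $v_1=u_1/\|u_1\|$, $v_2=u_2/\|u_2\|$. Let $S(x,\epsilon)=\{z\in S_{\mathbb{X}} : \inf_{\lambda\in\mathbb{R}}\|x+\lambda z\|=\sqrt{1-\epsilon^2}\}$. Then $S(x,\epsilon)=\{\pm v_1,\pm v_2\}$ if $\epsilon\in(0,1)$, and $S(x,\epsilon)=\{y'\in S_{\mathbb{X}} : x\perp_B y'\}$ if $\epsilon=0$.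
   Context: $S_{\mathbb{X}}$ is the unit sphere of $\mathbb{X}$. For $x,y\in\mathbb{X}$, $x\perp_B y$ (Birkhoff-James orthogonality) means $\|x+\lambda y\|\geq\|x\|$ for all $\lambda\in\mathbb{R}$. For $\epsilon\in[0,1)$, $x\perp_D^{\epsilon} y$ means $\|x+\lambda y\|\geq\sqrt{1-\epsilon^2}\,\|x\|$ for all $\lambda\in\mathbb{R}$. *)

theory Defs
  imports "HOL-Analysis.Analysis"
begin

definition bj_orth :: "'a::real_normed_vector \<Rightarrow> 'a \<Rightarrow> bool" where
  "bj_orth x y \<longleftrightarrow> (\<forall>l::real. norm (x + l *\<^sub>R y) \<ge> norm x)"

definition dorth :: "real \<Rightarrow> 'a::real_normed_vector \<Rightarrow> 'a \<Rightarrow> bool" where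
  "dorth \<epsilon> x y \<longleftrightarrow> (\<forall>l::real. norm (x + l *\<^sub>R y) \<ge> sqrt (1 - \<epsilon>\<^sup>2) * norm x)"

definition S_set :: "'a::real_normed_vector \<Rightarrow> real \<Rightarrow> 'a set" where
  "S_set x \<epsilon> = {z. norm z = 1 \<and> (INF l::real. norm (x + l *\<^sub>R z)) = sqrt (1 - \<epsilon>\<^sup>2)}"

end

theory Submission
  imports Defs
begin

definition Dd :: "'a::real_normed_vector \<Rightarrow> 'a \<Rightarrow> real" where
  "Dd x w = (INF l::real. norm (x + l *\<^sub>R w))"

lemma Dd_bdd: "bdd_below (range (\<lambda>l::real. norm (x + l *\<^sub>R w)))"
  by (rule bdd_belowI[of _ 0]) auto

lemma Dd_le: "Dd x w \<le> norm (x + l *\<^sub>R w)"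
  unfolding Dd_def by (rule cINF_lower[OF Dd_bdd]) simp

lemma Dd_ge: "(\<And>l. a \<le> norm (x + l *\<^sub>R w)) \<Longrightarrow> a \<le> Dd x w"
  unfolding Dd_def by (rule cINF_greatest) auto

lemma Dd_nonneg: "0 \<le> Dd x w" by (rule Dd_ge) simp

lemma Dd_less: "Dd x w < a \<Longrightarrow> \<exists>l. norm (x + l *\<^sub>R w) < a"
  by (meson Dd_ge not_le)

lemma Dd_scale: assumes "k \<noteq> 0" shows "Dd x (k *\<^sub>R w) = Dd x w"
proof (rule antisym)
  show "Dd x (k *\<^sub>R w) \<le> Dd x w"
  proof (rule Dd_ge)
    fix l show "Dd x (k *\<^sub>R w) \<le> norm (x + l *\<^sub>R w)"
      using Dd_le[of x "k *\<^sub>R w" "l/k"] assms by simp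
  qed
  show "Dd x w \<le> Dd x (k *\<^sub>R w)"
  proof (rule Dd_ge)
    fix l show "Dd x w \<le> norm (x + l *\<^sub>R (k *\<^sub>R w))"
      using Dd_le[of x w "l*k"] by simp
  qed
qed

lemma Dd_negx: "Dd (-x) w = Dd x w"
proof (rule antisym)
  show "Dd (-x) w \<le> Dd x w"
  proof (rule Dd_ge)
    fix l
    have "-x + (-l) *\<^sub>R w = - (x + l *\<^sub>R w)" by simp
    then have "norm (-x + (-l) *\<^sub>R w) = norm (x + l *\<^sub>R w)" by (metis norm_minus_cancel)
    then show "Dd (-x) w \<le> norm (x + l *\<^sub>R w)" using Dd_le[of "-x" w "-l"] by simp
  qed
  show "Dd x w \<le> Dd (-x) w"
  proof (rule Dd_ge)
    fix l
    have "x + (-l) *\<^sub>R w = - (-x + l *\<^sub>R w)" by simp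
    then have "norm (x + (-l) *\<^sub>R w) = norm (-x + l *\<^sub>R w)" by (metis norm_minus_cancel)
    then show "Dd x w \<le> norm (-x + l *\<^sub>R w)" using Dd_le[of x w "-l"] by simp
  qed
qed

lemma Dd_zero: "Dd x 0 = norm x"
  using Dd_le[of x 0 0] Dd_ge[of "norm x" x 0] by simp

lemma Dd_self: "Dd x x = 0"
  using Dd_le[of x x "-1"] Dd_nonneg[of x x] by simp

lemma dorth_iff: "norm x = 1 \<Longrightarrow> dorth e x w \<longleftrightarrow> sqrt (1 - e\<^sup>2) \<le> Dd x w"
  unfolding dorth_def
proof
  assume "norm x = 1" "\<forall>l. sqrt (1 - e\<^sup>2) * norm x \<le> norm (x + l *\<^sub>R w)"
  then show "sqrt (1 - e\<^sup>2) \<le> Dd x w" by (intro Dd_ge) simp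
next
  assume "norm x = 1" "sqrt (1 - e\<^sup>2) \<le> Dd x w"
  then show "\<forall>l. sqrt (1 - e\<^sup>2) * norm x \<le> norm (x + l *\<^sub>R w)"
    using Dd_le order_trans by fastforce
qed

lemma bj_coef:
  assumes "bj_orth x y" "norm x = 1"
  shows "\<bar>a\<bar> \<le> norm (a *\<^sub>R x + b *\<^sub>R y)"
proof (cases "a = 0")
  case True then show ?thesis by simp
next
  case False
  have "a *\<^sub>R x + b *\<^sub>R y = a *\<^sub>R (x + (b/a) *\<^sub>R y)" using False by (simp add: algebra_simps)
  then have e: "norm (a *\<^sub>R x + b *\<^sub>R y) = \<bar>a\<bar> * norm (x + (b/a) *\<^sub>R y)" by simp
  have "1 \<le> norm (x + (b/a) *\<^sub>R y)" using assms unfolding bj_orth_def by auto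
  then have "\<bar>a\<bar> * 1 \<le> \<bar>a\<bar> * norm (x + (b/a) *\<^sub>R y)" by (intro mult_left_mono) auto
  then show ?thesis using e by simp
qed

lemma family:
  fixes x y :: "'a::real_normed_vector" and c T :: real
  assumes x1: "norm x = 1" and y1: "norm y = 1" and bj: "bj_orth x y"
    and c0: "0 < c" and c1: "c < 1"
    and T: "T = Inf {t \<in> {0..1}. c \<le> Dd x ((1 - t) *\<^sub>R x + t *\<^sub>R y)}"
  shows "T \<in> {0..1} \<and> Dd x ((1 - T) *\<^sub>R x + T *\<^sub>R y) = c \<and>
    (\<forall>t\<in>{0..1}. Dd x ((1 - t) *\<^sub>R x + t *\<^sub>R y) = c \<longrightarrow> t = T)"
proof -
  define w where "w t = (1 - t) *\<^sub>R x + t *\<^sub>R y" for t :: real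
  define f where "f t = Dd x (w t)" for t
  have bjl: "\<bar>a\<bar> \<le> norm (a *\<^sub>R x + b *\<^sub>R y)" for a b using bj_coef[OF bj x1] .
  have wle: "norm (w t) \<le> 1" if "t \<in> {0..1}" for t
  proof -
    have "norm (w t) \<le> norm ((1-t) *\<^sub>R x) + norm (t *\<^sub>R y)" unfolding w_def by (rule norm_triangle_ineq)
    also have "\<dots> = 1" using that x1 y1 by simp
    finally show ?thesis .
  qed
  have wge: "1/3 \<le> norm (w t)" if "t \<in> {0..1}" for t
  proof -
    have a: "\<bar>1-t\<bar> \<le> norm (w t)" unfolding w_def by (rule bjl)
    have "norm (t *\<^sub>R y) \<le> norm (w t) + norm ((1-t) *\<^sub>R x)"
      using norm_triangle_ineq4[of "w t" "(1-t) *\<^sub>R x"] by (simp add: w_def)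
    then have b: "t \<le> norm (w t) + (1 - t)" using that x1 y1 by simp
    show ?thesis using a b that by auto
  qed
  have f0: "f 0 = 0"
    using Dd_le[of x "w 0" "-1"] Dd_nonneg[of x "w 0"] by (simp add: f_def w_def)
  have fle1: "f t \<le> 1" for t using Dd_le[of x "w t" 0] x1 by (simp add: f_def)
  have f1: "f 1 = 1"
  proof -
    have "1 \<le> f 1" unfolding f_def w_def using bj x1 by (auto intro!: Dd_ge simp: bj_orth_def)
    then show ?thesis using fle1[of 1] by simp
  qed
  have lip: "f s \<le> f t + 12 * \<bar>s - t\<bar>" if s: "s \<in> {0..1}" and t: "t \<in> {0..1}" for s t
  proof -
    have "f s - 12 * \<bar>s - t\<bar> \<le> Dd x (w t)"
    proof (rule Dd_ge)
      fix l
      show "f s - 12 * \<bar>s - t\<bar> \<le> norm (x + l *\<^sub>R w t)"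
      proof (cases "\<bar>l\<bar> \<le> 6")
        case True
        have e: "w s - w t = (t - s) *\<^sub>R (x - y)" by (simp add: w_def algebra_simps)
        have "norm (x - y) \<le> 2" using norm_triangle_ineq4[of x y] x1 y1 by simp
        then have "\<bar>t - s\<bar> * norm (x - y) \<le> \<bar>t - s\<bar> * 2" by (intro mult_left_mono) auto
        then have n: "norm (w s - w t) \<le> 2 * \<bar>s - t\<bar>" unfolding e by (simp add: abs_minus_commute)
        have "f s \<le> norm (x + l *\<^sub>R w s)" unfolding f_def by (rule Dd_le)
        moreover have "norm (x + l *\<^sub>R w s) \<le> norm (x + l *\<^sub>R w t) + \<bar>l\<bar> * norm (w s - w t)"
        proof -
          have "x + l *\<^sub>R w s = (x + l *\<^sub>R w t) + l *\<^sub>R (w s - w t)" by (simp add: algebra_simps)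
          then show ?thesis using norm_triangle_ineq[of "x + l *\<^sub>R w t" "l *\<^sub>R (w s - w t)"] by (metis norm_scaleR)
        qed
        moreover have "\<bar>l\<bar> * norm (w s - w t) \<le> 6 * (2 * \<bar>s - t\<bar>)"
          using True n by (intro mult_mono) auto
        ultimately show ?thesis by linarith
      next
        case False
        have "\<bar>l\<bar> * norm (w t) \<le> norm (x + l *\<^sub>R w t) + norm x"
          using norm_triangle_ineq4[of "x + l *\<^sub>R w t" x] by simp
        moreover have "6 * (1/3) \<le> \<bar>l\<bar> * norm (w t)"
          using False wge[OF t] by (intro mult_mono) auto
        moreover have "f s \<le> 1" by (rule fle1)
        ultimately have "1 \<le> norm (x + l *\<^sub>R w t)" using x1 by linarith
        moreover have "0 \<le> 12 * \<bar>s - t\<bar>" by simp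
        ultimately show ?thesis using \<open>f s \<le> 1\<close> by linarith
      qed
    qed
    then show ?thesis unfolding f_def by linarith
  qed
  have cont: "continuous_on {0..1} f"
    unfolding continuous_on_iff
  proof (intro ballI allI impI)
    fix t e :: real assume t: "t \<in> {0..1}" and e: "0 < e"
    show "\<exists>d>0. \<forall>s\<in>{0..1}. dist s t < d \<longrightarrow> dist (f s) (f t) < e"
    proof (intro exI[of _ "e/12"] conjI ballI impI)
      show "0 < e/12" using e by simp
      fix s assume s: "s \<in> {0..1}" and d: "dist s t < e/12"
      have "f s \<le> f t + 12 * \<bar>s - t\<bar>" using lip[OF s t] .
      moreover have "f t \<le> f s + 12 * \<bar>s - t\<bar>" using lip[OF t s] by (simp add: abs_minus_commute)
      moreover have "12 * \<bar>s - t\<bar> < e" using d by (simp add: dist_real_def)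
      ultimately show "dist (f s) (f t) < e" unfolding dist_real_def by (simp add: abs_less_iff)
    qed
  qed
  have I: "f r' < c" if r: "r \<in> {0..1}" and fr: "f r < c" and r': "0 \<le> r'" "r' \<le> r" for r r'
  proof (cases "r' = 0")
    case True then show ?thesis using f0 c0 by simp
  next
    case False
    then have r'p: "0 < r'" using r' by simp
    have rp: "0 < r" using r'p r' by simp
    obtain l where l: "norm (x + l *\<^sub>R w r) < c" using Dd_less fr unfolding f_def by blast
    have lneg: "l < 0"
    proof (rule ccontr)
      assume nl: "\<not> l < 0"
      have "x + l *\<^sub>R w r = (1 + l*(1-r)) *\<^sub>R x + (l*r) *\<^sub>R y" by (simp add: w_def algebra_simps)
      then have "\<bar>1 + l*(1-r)\<bar> \<le> norm (x + l *\<^sub>R w r)" using bjl by metis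
      moreover have "0 \<le> l*(1-r)" using nl r by (intro mult_nonneg_nonneg) auto
      ultimately show False using l c1 by linarith
    qed
    define m where "m = -l"
    have mp: "0 < m" using lneg m_def by simp
    have pm: "norm (x - m *\<^sub>R w r) < c" using l by (simp add: m_def)
    define a where "a = r'/r"
    have a0: "0 < a" "a \<le> 1" using r'p rp r' by (auto simp: a_def)
    define th where "th = a / (m*(1-a) + a)"
    have mna: "0 \<le> m*(1-a)" using mp a0 by (intro mult_nonneg_nonneg) auto
    have den: "0 < m*(1-a) + a" using mna a0 by simp
    have th0: "0 < th" "th \<le> 1" using den a0 mna by (auto simp: th_def)
    define k where "k = th*m + (1 - th)"
    have key: "th * m = a * k"
    proof -
      have "th * (m*(1-a) + a) = a" using den by (simp add: th_def)
      then show ?thesis by (simp add: k_def algebra_simps)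
    qed
    have kr: "k * r' = th * m * r" using key rp unfolding a_def by (simp add: field_simps)
    have eq: "x - k *\<^sub>R w r' = th *\<^sub>R (x - m *\<^sub>R w r)"
    proof -
      have "x - k *\<^sub>R w r' = (1 - k + k*r') *\<^sub>R x - (k*r') *\<^sub>R y" by (simp add: w_def algebra_simps)
      also have "\<dots> = (th - th*m + th*m*r) *\<^sub>R x - (th*m*r) *\<^sub>R y" using kr by (simp add: k_def)
      also have "\<dots> = th *\<^sub>R (x - m *\<^sub>R w r)" by (simp add: w_def algebra_simps)
      finally show ?thesis .
    qed
    have "norm (x - k *\<^sub>R w r') < c"
    proof -
      have "norm (x - k *\<^sub>R w r') = th * norm (x - m *\<^sub>R w r)" using eq th0 by simp
      also have "\<dots> \<le> norm (x - m *\<^sub>R w r)" using th0 by (simp add: mult_left_le_one_le)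
      finally show ?thesis using pm by linarith
    qed
    then have "Dd x (w r') < c" using Dd_le[of x "w r'" "-k"] by simp
    then show ?thesis by (simp add: f_def)
  qed
  have II: "f s < c" if s: "0 \<le> s" "s < t" and t: "t \<le> 1" and ft: "f t \<le> c" for s t
  proof -
    define d where "d = min ((1-c)/2) (c*(1-c)*(t-s)/2)"
    have d0: "0 < d" using c0 c1 s by (simp add: d_def)
    have d1a: "d \<le> (1-c)/2" unfolding d_def by (rule min.cobounded1)
    have "d \<le> c*(1-c)*(t-s)/2" unfolding d_def by (rule min.cobounded2)
    then have d1: "d \<le> (1-c)/2" "d \<le> c*((1-c)/2)*(t-s)" using d1a by simp_all
    have d1b: "2*d \<le> 1 - c" using d1a by simp
    obtain l where l: "norm (x + l *\<^sub>R w t) < c + d"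
      using Dd_less[of x "w t" "c+d"] ft d0 unfolding f_def by force
    have tin: "t \<in> {0..1}" using s t by simp
    have lneg: "l < 0"
    proof (rule ccontr)
      assume nl: "\<not> l < 0"
      have "x + l *\<^sub>R w t = (1 + l*(1-t)) *\<^sub>R x + (l*t) *\<^sub>R y" by (simp add: w_def algebra_simps)
      then have "\<bar>1 + l*(1-t)\<bar> \<le> norm (x + l *\<^sub>R w t)" using bjl by metis
      moreover have "0 \<le> l*(1-t)" using nl t by (intro mult_nonneg_nonneg) auto
      moreover have "1 + l*(1-t) \<le> \<bar>1 + l*(1-t)\<bar>" by (rule abs_ge_self)
      ultimately have "1 < c + d" using l by linarith
      then show False using c1 d1b by linarith
    qed
    define m where "m = -l"
    have mp: "0 < m" using lneg m_def by simp
    have pm: "norm (x - m *\<^sub>R w t) < c + d" using l by (simp add: m_def)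
    have mlow: "(1-c)/2 \<le> m"
    proof -
      have "x = (x - m *\<^sub>R w t) + m *\<^sub>R w t" by simp
      then have "norm x \<le> norm (x - m *\<^sub>R w t) + norm (m *\<^sub>R w t)" by (metis norm_triangle_ineq)
      moreover have "norm (m *\<^sub>R w t) \<le> m" using mp wle[OF tin] by (simp add: mult_left_le)
      ultimately have "1 - c \<le> 2*m" using pm x1 d1b by linarith
      then show ?thesis by simp
    qed
    define th where "th = d / (c + d)"
    have th0: "0 < th" "th < 1" using c0 d0 by (auto simp: th_def)
    have th1: "1 - th = c / (c + d)" using c0 d0 by (simp add: th_def field_simps)
    have th2: "(1 - th) * (c + d) = c" using c0 d0 th1 by simp
    define k where "k = (1-th)*m + th"
    have kp: "0 < k" using th0 mp unfolding k_def by (simp add: add_nonneg_pos)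
    define r where "r = (1-th)*m*t / k"
    have kr: "k * r = (1-th)*m*t" using kp by (simp add: r_def)
    have eq: "x - k *\<^sub>R w r = (1 - th) *\<^sub>R (x - m *\<^sub>R w t)"
    proof -
      have "x - k *\<^sub>R w r = (1 - k + k*r) *\<^sub>R x - (k*r) *\<^sub>R y" by (simp add: w_def algebra_simps)
      also have "\<dots> = (1 - th - (1-th)*m + (1-th)*m*t) *\<^sub>R x - ((1-th)*m*t) *\<^sub>R y"
        using kr by (simp add: k_def)
      also have "\<dots> = (1 - th) *\<^sub>R (x - m *\<^sub>R w t)" by (simp add: w_def algebra_simps)
      finally show ?thesis .
    qed
    have "norm (x - k *\<^sub>R w r) < c"
    proof -
      have "norm (x - k *\<^sub>R w r) = (1 - th) * norm (x - m *\<^sub>R w t)" using eq th0 by simp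
      also have "\<dots> < (1-th) * (c + d)" using pm th0 by simp
      finally show ?thesis using th2 by simp
    qed
    then have fr: "f r < c" using Dd_le[of x "w r" "-k"] by (simp add: f_def)
    have "k * r \<le> k * t" using kr th0 s by (simp add: k_def algebra_simps)
    then have rle: "r \<le> t" using kp by simp
    have A: "th * s \<le> (1-th)*m*(t-s)"
    proof -
      have "c*((1-c)/2)*(t-s) \<le> c*m*(t-s)" using mlow c0 s by (intro mult_right_mono mult_left_mono) auto
      then have "d \<le> c*m*(t-s)" using d1 by linarith
      then have "d/(c+d) \<le> (c*m*(t-s))/(c+d)" using c0 d0 by (intro divide_right_mono) auto
      then have "th \<le> (1-th)*m*(t-s)" using th1 by (simp add: th_def)
      moreover have "th * s \<le> th" using th0 s t by (simp add: mult_left_le)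
      ultimately show ?thesis by linarith
    qed
    have "k * s \<le> k * r"
    proof -
      have "k * s = (1-th)*m * s + th * s" by (simp add: k_def algebra_simps)
      moreover have "k*r = (1-th)*m * s + (1-th)*m*(t-s)" using kr by (simp add: algebra_simps)
      ultimately show ?thesis using A by linarith
    qed
    then have rge: "s \<le> r" using kp by simp
    show ?thesis using I[of r s] fr rle rge s t by simp
  qed
  define A where "A = {t \<in> {0..1}. c \<le> f t}"
  have TA: "T = Inf A" using T by (simp add: A_def f_def w_def)
  have Aclosed: "closed A" unfolding A_def
    using continuous_on_closed_Collect_le[of "{0..1}" "\<lambda>_. c" f] cont by auto
  have A1: "1 \<in> A" using f1 c1 by (simp add: A_def)
  have Abdd: "bdd_below A" by (rule bdd_belowI[of _ 0]) (auto simp: A_def)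
  have TinA: "T \<in> A" unfolding TA using closed_contains_Inf[OF _ Abdd Aclosed] A1 by auto
  have Tin: "T \<in> {0..1}" and fT: "c \<le> f T" using TinA by (auto simp: A_def)
  have lowT: "T \<le> t" if "t \<in> A" for t unfolding TA using cInf_lower[OF that Abdd] .
  have contT: "continuous_on {0..T} f" by (rule continuous_on_subset[OF cont]) (use Tin in auto)
  obtain s where s: "0 \<le> s" "s \<le> T" "f s = c"
    using IVT'[of f 0 c T] f0 c0 fT Tin contT by auto
  have "s \<in> A" using s Tin by (simp add: A_def)
  then have fTc: "f T = c" using lowT s by force
  have uniq: "t = T" if "t \<in> {0..1}" "f t = c" for t
  proof -
    have "T \<le> t" using lowT that by (simp add: A_def)
    moreover have "\<not> T < t" using II[of T t] that Tin fT by auto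
    ultimately show ?thesis by simp
  qed
  show ?thesis using Tin fTc uniq unfolding f_def w_def by blast
qed


lemma unit_eq:
  fixes u z :: "'a::real_normed_vector"
  assumes "z = k *\<^sub>R u" "0 < k" "norm z = 1"
  shows "z = u /\<^sub>R norm u"
proof -
  have "norm u * k = 1" using assms by (simp add: mult.commute)
  then have "inverse (norm u) = k" by (rule inverse_unique)
  then show ?thesis using assms by simp
qed

theorem theorem2p2:
  fixes x y :: "'a::banach" and \<epsilon> t1 t2 :: real and u1 u2 v1 v2 :: 'a
  assumes dim2: "dim (UNIV :: 'a set) = 2"
    and x1: "norm x = 1" and y1: "norm y = 1"
    and eps: "0 \<le> \<epsilon>" "\<epsilon> < 1"
    and bj: "bj_orth x y"
    and t1: "t1 = Inf {t \<in> {0..1}. dorth \<epsilon> x ((1 - t) *\<^sub>R x + t *\<^sub>R y)}"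
    and t2: "t2 = Inf {t \<in> {0..1}. dorth \<epsilon> x (- ((1 - t) *\<^sub>R x) + t *\<^sub>R y)}"
    and u1: "u1 = (1 - t1) *\<^sub>R x + t1 *\<^sub>R y"
    and u2: "u2 = - ((1 - t2) *\<^sub>R x) + t2 *\<^sub>R y"
    and v1: "v1 = u1 /\<^sub>R norm u1"
    and v2: "v2 = u2 /\<^sub>R norm u2"
  shows "(0 < \<epsilon> \<longrightarrow> S_set x \<epsilon> = {v1, -v1, v2, -v2})
       \<and> (\<epsilon> = 0 \<longrightarrow> S_set x \<epsilon> = {y'. norm y' = 1 \<and> bj_orth x y'})"
proof -
  have xny: "x \<notin> span {y}"
  proof
    assume "x \<in> span {y}"
    then obtain k where k: "x = k *\<^sub>R y" by (auto simp: span_singleton)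
    have "norm x \<le> norm (x + (-k) *\<^sub>R y)" using bj unfolding bj_orth_def by blast
    then show False using k x1 by simp
  qed
  have y0: "y \<noteq> 0" using y1 by auto
  have indy: "independent {y}"
    using real_vector.independent_insertI[of y "{}"] real_vector.independent_empty y0 by simp
  have ind2: "independent {x, y}" using real_vector.independent_insertI[OF xny indy] .
  have spanU: "z \<in> span {x, y}" for z
  proof (rule ccontr)
    assume zn: "z \<notin> span {x, y}"
    have ind3: "independent {z, x, y}" using real_vector.independent_insertI[OF zn ind2] .
    obtain B :: "'a set" where B: "B \<subseteq> UNIV" "independent B" "UNIV \<subseteq> span B" "card B = dim (UNIV :: 'a set)"
      using real_vector.basis_exists[of "UNIV :: 'a set"] by blast
    have fB: "finite B" using B(4) dim2 card.infinite by force
    have "card {z,x,y} \<le> card B" using real_vector.independent_span_bound[OF fB ind3] B(3) by auto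
    moreover have "z \<noteq> x" "z \<noteq> y" using zn by (auto intro: real_vector.span_base)
    moreover have "x \<noteq> y" using xny by (auto intro: real_vector.span_base)
    ultimately show False using B(4) dim2 by simp
  qed
  have decomp: "\<exists>a b. z = a *\<^sub>R x + b *\<^sub>R y" for z
  proof -
    have "z \<in> span (insert x {y})" using spanU by simp
    then obtain a where "z - a *\<^sub>R x \<in> span {y}" using real_vector.span_breakdown_eq by blast
    then obtain b where "z - a *\<^sub>R x = b *\<^sub>R y" by (auto simp: span_singleton)
    then have "z = a *\<^sub>R x + b *\<^sub>R y" by (simp add: algebra_simps)
    then show ?thesis by blast
  qed
  have Seps: "S_set x \<epsilon> = {z. norm z = 1 \<and> Dd x z = sqrt (1 - \<epsilon>\<^sup>2)}"
    by (simp add: S_set_def Dd_def)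
  show ?thesis
  proof (intro conjI impI)
    assume e0: "\<epsilon> = 0"
    have "Dd x z = 1 \<longleftrightarrow> bj_orth x z" for z
    proof
      assume "Dd x z = 1" then show "bj_orth x z" using Dd_le x1 unfolding bj_orth_def by metis
    next
      assume "bj_orth x z" then have "1 \<le> Dd x z" using x1 unfolding bj_orth_def by (intro Dd_ge) auto
      moreover have "Dd x z \<le> 1" using Dd_le[of x z 0] x1 by simp
      ultimately show "Dd x z = 1" by simp
    qed
    then show "S_set x \<epsilon> = {y'. norm y' = 1 \<and> bj_orth x y'}" using Seps e0 by simp
  next
    assume e0: "0 < \<epsilon>"
    define c where "c = sqrt (1 - \<epsilon>\<^sup>2)"
    have "\<epsilon>\<^sup>2 < 1\<^sup>2" using eps by (intro power_strict_mono) auto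
    then have c0: "0 < c" by (simp add: c_def)
    have "0 < \<epsilon>\<^sup>2" using e0 by simp
    then have "sqrt (1 - \<epsilon>\<^sup>2) < sqrt 1" by (intro real_sqrt_less_mono) simp
    then have c1: "c < 1" by (simp add: c_def)
    have Sc: "S_set x \<epsilon> = {z. norm z = 1 \<and> Dd x z = c}" using Seps c_def by simp
    have t1': "t1 = Inf {t \<in> {0..1}. c \<le> Dd x ((1 - t) *\<^sub>R x + t *\<^sub>R y)}"
      using t1 by (simp add: dorth_iff[OF x1] c_def)
    have xm1: "norm (-x) = 1" using x1 by simp
    have bjm: "bj_orth (-x) y"
      unfolding bj_orth_def
    proof
      fix l
      have "norm x \<le> norm (x + (-l) *\<^sub>R y)" using bj unfolding bj_orth_def by blast
      also have "x + (-l) *\<^sub>R y = - (-x + l *\<^sub>R y)" by simp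
      finally show "norm (-x) \<le> norm (-x + l *\<^sub>R y)" by (metis norm_minus_cancel)
    qed
    have t2': "t2 = Inf {t \<in> {0..1}. c \<le> Dd (-x) ((1 - t) *\<^sub>R (-x) + t *\<^sub>R y)}"
      using t2 by (simp add: dorth_iff[OF x1] c_def Dd_negx)
    have F1: "t1 \<in> {0..1}" "Dd x u1 = c"
      "\<And>t. t\<in>{0..1} \<Longrightarrow> Dd x ((1 - t) *\<^sub>R x + t *\<^sub>R y) = c \<Longrightarrow> t = t1"
      using family[OF x1 y1 bj c0 c1 t1'] u1 by auto
    have F2: "t2 \<in> {0..1}" "Dd x u2 = c"
      "\<And>t. t\<in>{0..1} \<Longrightarrow> Dd x (- ((1 - t) *\<^sub>R x) + t *\<^sub>R y) = c \<Longrightarrow> t = t2"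
      using family[OF xm1 y1 bjm c0 c1 t2'] u2 by (auto simp: Dd_negx)
    have u1n: "u1 \<noteq> 0" using F1(2) c1 Dd_zero[of x] x1 by auto
    have u2n: "u2 \<noteq> 0" using F2(2) c1 Dd_zero[of x] x1 by auto
    have vin: "norm v = 1 \<and> Dd x v = c" if "v = u /\<^sub>R norm u" "u \<noteq> 0" "Dd x u = c" for u v
      using that Dd_scale[of "inverse (norm u)" x u] by simp
    have vneg: "norm (-v) = 1 \<and> Dd x (-v) = c" if "norm v = 1 \<and> Dd x v = c" for v
      using that Dd_scale[of "-1" x v] by simp
    have pos: "z \<in> {v1, v2}" if z: "norm z = 1" "Dd x z = c" "z = a *\<^sub>R x + b *\<^sub>R y" "0 < b" for z a b
    proof (cases "0 \<le> a")
      case True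
      define t where "t = b / (a + b)"
      have ab: "0 < a + b" using True z(4) by simp
      have tin: "t \<in> {0..1}" using True z(4) ab by (simp add: t_def)
      have co: "(a+b)*(1-t) = a" "(a+b)*t = b" using ab by (simp_all add: t_def field_simps)
      have zt: "z = (a + b) *\<^sub>R ((1 - t) *\<^sub>R x + t *\<^sub>R y)"
        by (simp add: z(3) scaleR_add_right co)
      have "Dd x ((1 - t) *\<^sub>R x + t *\<^sub>R y) = c"
        using z(2) zt ab Dd_scale[of "a+b" x "(1 - t) *\<^sub>R x + t *\<^sub>R y"] by simp
      then have "t = t1" using F1(3) tin by blast
      then have "z = (a+b) *\<^sub>R u1" using zt u1 by simp
      then have "z = v1" using unit_eq[of z "a+b" u1] ab z(1) v1 by simp
      then show ?thesis by simp
    next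
      case False
      define t where "t = b / (b - a)"
      have ab: "0 < b - a" using False z(4) by simp
      have tin: "t \<in> {0..1}" using False z(4) ab by (simp add: t_def)
      have co: "(b-a)*(1-t) = -a" "(b-a)*t = b" using ab by (simp_all add: t_def field_simps)
      have "(b - a) *\<^sub>R (- ((1 - t) *\<^sub>R x) + t *\<^sub>R y) = (- ((b-a)*(1-t))) *\<^sub>R x + ((b-a)*t) *\<^sub>R y"
        by (simp add: algebra_simps)
      then have zt: "z = (b - a) *\<^sub>R (- ((1 - t) *\<^sub>R x) + t *\<^sub>R y)"
        using co z(3) by simp
      have "Dd x (- ((1 - t) *\<^sub>R x) + t *\<^sub>R y) = c"
        using z(2) zt ab Dd_scale[of "b-a" x "- ((1 - t) *\<^sub>R x) + t *\<^sub>R y"] by simp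
      then have "t = t2" using F2(3) tin by blast
      then have "z = (b-a) *\<^sub>R u2" using zt u2 by simp
      then have "z = v2" using unit_eq[of z "b-a" u2] ab z(1) v2 by simp
      then show ?thesis by simp
    qed
    show "S_set x \<epsilon> = {v1, -v1, v2, -v2}"
    proof
      have a1: "norm v1 = 1 \<and> Dd x v1 = c" using vin[OF v1 u1n F1(2)] .
      have a2: "norm v2 = 1 \<and> Dd x v2 = c" using vin[OF v2 u2n F2(2)] .
      show "{v1, -v1, v2, -v2} \<subseteq> S_set x \<epsilon>" using a1 a2 vneg[OF a1] vneg[OF a2] by (auto simp: Sc)
      show "S_set x \<epsilon> \<subseteq> {v1, -v1, v2, -v2}"
      proof
        fix z assume "z \<in> S_set x \<epsilon>"
        then have z: "norm z = 1" "Dd x z = c" by (auto simp: Sc)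
        obtain a b where ab: "z = a *\<^sub>R x + b *\<^sub>R y" using decomp by blast
        have "b \<noteq> 0"
        proof
          assume "b = 0"
          then have za: "z = a *\<^sub>R x" using ab by simp
          moreover have "a \<noteq> 0" using z(1) za by auto
          ultimately have "Dd x z = 0" using Dd_scale[of a x x] Dd_self by simp
          then show False using z c0 by simp
        qed
        then consider "0 < b" | "b < 0" by linarith
        then show "z \<in> {v1, -v1, v2, -v2}"
        proof cases
          case 1 then show ?thesis using pos[OF z ab] by auto
        next
          case 2
          have n1: "norm (-z) = 1" using z by simp
          have d1: "Dd x (-z) = c" using z Dd_scale[of "-1" x z] by simp
          have e: "-z = (-a) *\<^sub>R x + (-b) *\<^sub>R y" using ab by simp
          have "0 < -b" using 2 by simp
          then have "-z \<in> {v1, v2}" by (rule pos[OF n1 d1 e])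
          then show ?thesis by auto
        qed
      qed
    qed
  qed
qed

end
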